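(* Let $(\mu,s)$ be a configuration under no observability for the objective game $G$ such that for every $i\in N$, every type $\theta_i\in\operatorname{supp}\mu_i$ is of the form $\theta_i=\alpha\pi_i+\beta$ for some real $\alpha>0$, $\beta$ (possibly depending on $\theta_i$). Suppose that for every nonempty $J\subseteq N$, every mutant sub-profile $\tilde\theta_J\in\prod_{j\in J}(\Theta\setminus\operatorname{supp}\mu_j)$ and every $\eta>0$, the nearby set $B_0^\eta(\tilde\mu^\varepsilon;s)$ is nonempty for all $\varepsilon\in(0,1)^{|J|}$ with $\|\varepsilon\|$ sufficiently small. Then $(\mu,s)$ is stable.
   Context: Objective game: $G=(N,A,\pi)$ is a finite $n$-player normal-form game, $N=\{1,\dots,n\}$, finite action sets $A_i$, $A=\prod_iA_i$, fitness functions $\pi_i:A\to\mathbb{R}$ extended multilinearly to $\prod_i\Delta(A_i)$. Preference types: $\Theta=\mathbb{R}^A$ (extended multilinearly). $\mathcal{M}(\Theta^n)$: product distributions $\mu=\mu_1\times\dots\times\mu_n$ on $\Theta^n$ with finitely supported marginals; $\operatorname{supp}\mu=\prod_i\operatorname{supp}\mu_i$, $\mu_{-i}(\theta_{-i})=\prod_{j\neq i}\mu_j(\theta_j)$. Mutants: for nonempty $J\subseteq N$, a mutant sub-profile is $\tilde\theta_J\in\prod_{j\in J}(\Theta\setminus\operatorname{supp}\mu_j)$ with shares $\varepsilon\in(0,1)^{|J|}$, $\|\varepsilon\|=\max_j\varepsilon_j$; post-entry $\tilde\mu^\varepsilon_i=(1-\varepsilon_i)\mu_i+\varepsilon_i\delta_{\tilde\theta_i}$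 for $i\in J$, $\tilde\mu^\varepsilon_i=\mu_i$ otherwise. No observability: a strategy of player $i$ is $s_i:\operatorname{supp}\mu_i\to\Delta(A_i)$, $s(\theta)=(s_1(\theta_1),\dots,s_n(\theta_n))$; $s$ is a Bayesian–Nash equilibrium if for each $i$ and $\theta_i\in\operatorname{supp}\mu_i$, $s_i(\theta_i)\in\arg\max_{\sigma_i\in\Delta(A_i)}\sum_{\theta'_{-i}\in\operatorname{supp}\mu_{-i}}\mu_{-i}(\theta'_{-i})\theta_i(\sigma_i,s_{-i}(\theta'_{-i}))$; $B_0(\mu)$ is the set of these; $(\mu,s)$ with $s\in B_0(\mu)$ is a configuration, with aggregate outcome $x(\mu,s)=\big(\sum_{\theta_i}\mu_i(\theta_i)s_i(\theta_i)\big)_{i}$. Average fitness: $\Pi_{\theta_i}(\mu;s)=\pi_i(s_i(\theta_i),x(\mu,s)_{-i})$. Balanced: all types in each $\operatorname{supp}\mu_i$ have equal average fitness. Nearby set: for $\eta\ge0$, $B_0^\eta(\tilde\mu^\varepsilon;s)=\{\tilde s\in B_0(\tilde\mu^\varepsilon):\max_{i}\|\tilde s_i(\theta_i)-s_i(\theta_i)\|\le\eta\ \forall\theta\in\operatorname{supp}\mu\}$ (Euclidean norm). $(\mu,s)$ is stable if it is balanced and for every nonempty $J\subseteq N$, every $\tilde\theta_J$ and every $\eta>0$ there exist $\bar\eta\in[0,\eta)$ and $\bar\epsilon\in(0,1)$ such that for every $\varepsilon$ with $\|\varepsilon\|\in(0,\bar\epsilon)$, $B_0^{\bar\eta}(\tilde\mu^\varepsilon;s)\neq\emptyset$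 and every $\tilde s\in B_0^{\bar\eta}(\tilde\mu^\varepsilon;s)$ satisfies either (i) some $j\in J$ has $\Pi_{\theta_j}(\tilde\mu^\varepsilon;\tilde s)>\Pi_{\tilde\theta_j}(\tilde\mu^\varepsilon;\tilde s)$ for all $\theta_j\in\operatorname{supp}\mu_j$, or (ii) for every $i$ all types in $\operatorname{supp}\tilde\mu^\varepsilon_i$ have equal average fitness under $(\tilde\mu^\varepsilon,\tilde s)$. *)

theory Defs
  imports Complex_Main "HOL-Library.FuncSet"
begin

text \<open>A (preference) type is a function on pure profiles, i.e. an element of R^A;
to make Theta = R^A we normalise types to vanish outside the pure profiles.\<close>

definition profiles :: "('p \<Rightarrow> 'a set) \<Rightarrow> ('p \<Rightarrow> 'a) set" where
  "profiles A = PiE UNIV A"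

definition Theta :: "('p \<Rightarrow> 'a set) \<Rightarrow> (('p \<Rightarrow> 'a) \<Rightarrow> real) set" where
  "Theta A = {\<theta>. \<forall>a. a \<notin> profiles A \<longrightarrow> \<theta> a = 0}"

definition mixed :: "'a set \<Rightarrow> ('a \<Rightarrow> real) set" where
  "mixed B = {\<sigma>. (\<forall>a. 0 \<le> \<sigma> a) \<and> (\<forall>a. a \<notin> B \<longrightarrow> \<sigma> a = 0) \<and> sum \<sigma> B = 1}"

definition mlext :: "('p::finite \<Rightarrow> 'a set) \<Rightarrow> (('p \<Rightarrow> 'a) \<Rightarrow> real) \<Rightarrow> ('p \<Rightarrow> 'a \<Rightarrow> real) \<Rightarrow> real" where
  "mlext A \<theta> \<sigma> = (\<Sum>a\<in>profiles A. (\<Prod>p\<in>UNIV. \<sigma> p (a p)) * \<theta> a)"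

definition supp :: "('t \<Rightarrow> real) \<Rightarrow> 't set" where
  "supp m = {t. m t \<noteq> 0}"

definition is_dist :: "('p \<Rightarrow> 'a set) \<Rightarrow> ((('p \<Rightarrow> 'a) \<Rightarrow> real) \<Rightarrow> real) \<Rightarrow> bool" where
  "is_dist A m \<longleftrightarrow> (\<forall>t. 0 \<le> m t) \<and> finite (supp m) \<and> sum m (supp m) = 1 \<and> supp m \<subseteq> Theta A"

definition is_prod_dist :: "('p \<Rightarrow> 'a set) \<Rightarrow> ('p \<Rightarrow> (('p \<Rightarrow> 'a) \<Rightarrow> real) \<Rightarrow> real) \<Rightarrow> bool" where
  "is_prod_dist A \<mu> \<longleftrightarrow> (\<forall>i. is_dist A (\<mu> i))"

definition exp_payoff ::
  "('p::finite \<Rightarrow> 'a set) \<Rightarrow> ('p \<Rightarrow> (('p \<Rightarrow> 'a) \<Rightarrow> real) \<Rightarrow> real)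
   \<Rightarrow> ('p \<Rightarrow> (('p \<Rightarrow> 'a) \<Rightarrow> real) \<Rightarrow> 'a \<Rightarrow> real) \<Rightarrow> 'p
   \<Rightarrow> (('p \<Rightarrow> 'a) \<Rightarrow> real) \<Rightarrow> ('a \<Rightarrow> real) \<Rightarrow> real" where
  "exp_payoff A \<mu> s i \<theta> \<sigma> =
     (\<Sum>t\<in>PiE (UNIV - {i}) (\<lambda>j. supp (\<mu> j)).
        (\<Prod>j\<in>UNIV - {i}. \<mu> j (t j)) * mlext A \<theta> (\<lambda>j. if j = i then \<sigma> else s j (t j)))"

definition B0 ::
  "('p::finite \<Rightarrow> 'a set) \<Rightarrow> ('p \<Rightarrow> (('p \<Rightarrow> 'a) \<Rightarrow> real) \<Rightarrow> real)
   \<Rightarrow> ('p \<Rightarrow> (('p \<Rightarrow> 'a) \<Rightarrow> real) \<Rightarrow> 'a \<Rightarrow> real) set" where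
  "B0 A \<mu> = {s. \<forall>i. \<forall>\<theta>\<in>supp (\<mu> i). s i \<theta> \<in> mixed (A i) \<and>
                 (\<forall>\<sigma>\<in>mixed (A i). exp_payoff A \<mu> s i \<theta> \<sigma> \<le> exp_payoff A \<mu> s i \<theta> (s i \<theta>))}"

definition aggregate ::
  "('p \<Rightarrow> (('p \<Rightarrow> 'a) \<Rightarrow> real) \<Rightarrow> real) \<Rightarrow> ('p \<Rightarrow> (('p \<Rightarrow> 'a) \<Rightarrow> real) \<Rightarrow> 'a \<Rightarrow> real)
   \<Rightarrow> 'p \<Rightarrow> 'a \<Rightarrow> real" where
  "aggregate \<mu> s i = (\<lambda>a. \<Sum>\<theta>\<in>supp (\<mu> i). \<mu> i \<theta> * s i \<theta> a)"

definition avg_fit ::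
  "('p::finite \<Rightarrow> 'a set) \<Rightarrow> ('p \<Rightarrow> ('p \<Rightarrow> 'a) \<Rightarrow> real) \<Rightarrow> ('p \<Rightarrow> (('p \<Rightarrow> 'a) \<Rightarrow> real) \<Rightarrow> real)
   \<Rightarrow> ('p \<Rightarrow> (('p \<Rightarrow> 'a) \<Rightarrow> real) \<Rightarrow> 'a \<Rightarrow> real) \<Rightarrow> 'p \<Rightarrow> (('p \<Rightarrow> 'a) \<Rightarrow> real) \<Rightarrow> real" where
  "avg_fit A \<pi> \<mu> s i \<theta> = mlext A (\<pi> i) ((aggregate \<mu> s)(i := s i \<theta>))"

definition balanced ::
  "('p::finite \<Rightarrow> 'a set) \<Rightarrow> ('p \<Rightarrow> ('p \<Rightarrow> 'a) \<Rightarrow> real) \<Rightarrow> ('p \<Rightarrow> (('p \<Rightarrow> 'a) \<Rightarrow> real) \<Rightarrow> real)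
   \<Rightarrow> ('p \<Rightarrow> (('p \<Rightarrow> 'a) \<Rightarrow> real) \<Rightarrow> 'a \<Rightarrow> real) \<Rightarrow> bool" where
  "balanced A \<pi> \<mu> s \<longleftrightarrow>
     (\<forall>i. \<forall>\<theta>\<in>supp (\<mu> i). \<forall>\<theta>'\<in>supp (\<mu> i). avg_fit A \<pi> \<mu> s i \<theta> = avg_fit A \<pi> \<mu> s i \<theta>')"

text \<open>Post-entry distribution; only the values of theta_t and eps on J matter.\<close>
definition post_entry ::
  "('p \<Rightarrow> (('p \<Rightarrow> 'a) \<Rightarrow> real) \<Rightarrow> real) \<Rightarrow> 'p set \<Rightarrow> ('p \<Rightarrow> ('p \<Rightarrow> 'a) \<Rightarrow> real) \<Rightarrow> ('p \<Rightarrow> real)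
   \<Rightarrow> ('p \<Rightarrow> (('p \<Rightarrow> 'a) \<Rightarrow> real) \<Rightarrow> real)" where
  "post_entry \<mu> J \<theta>t \<epsilon> =
     (\<lambda>i. if i \<in> J then (\<lambda>\<theta>. (1 - \<epsilon> i) * \<mu> i \<theta> + \<epsilon> i * (if \<theta> = \<theta>t i then 1 else 0))
          else \<mu> i)"

definition mutant_profile ::
  "('p \<Rightarrow> 'a set) \<Rightarrow> ('p \<Rightarrow> (('p \<Rightarrow> 'a) \<Rightarrow> real) \<Rightarrow> real) \<Rightarrow> 'p set \<Rightarrow> ('p \<Rightarrow> ('p \<Rightarrow> 'a) \<Rightarrow> real) \<Rightarrow> bool" where
  "mutant_profile A \<mu> J \<theta>t \<longleftrightarrow> (\<forall>j\<in>J. \<theta>t j \<in> Theta A - supp (\<mu> j))"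

definition valid_shares :: "'p set \<Rightarrow> ('p \<Rightarrow> real) \<Rightarrow> bool" where
  "valid_shares J \<epsilon> \<longleftrightarrow> (\<forall>j\<in>J. 0 < \<epsilon> j \<and> \<epsilon> j < 1)"

definition shares_norm :: "'p set \<Rightarrow> ('p \<Rightarrow> real) \<Rightarrow> real" where
  "shares_norm J \<epsilon> = Max (\<epsilon> ` J)"

definition mdist :: "'a set \<Rightarrow> ('a \<Rightarrow> real) \<Rightarrow> ('a \<Rightarrow> real) \<Rightarrow> real" where
  "mdist B \<sigma> \<tau> = sqrt (\<Sum>a\<in>B. (\<sigma> a - \<tau> a)\<^sup>2)"

definition nearby ::
  "('p::finite \<Rightarrow> 'a set) \<Rightarrow> ('p \<Rightarrow> (('p \<Rightarrow> 'a) \<Rightarrow> real) \<Rightarrow> real)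
   \<Rightarrow> ('p \<Rightarrow> (('p \<Rightarrow> 'a) \<Rightarrow> real) \<Rightarrow> 'a \<Rightarrow> real) \<Rightarrow> ('p \<Rightarrow> (('p \<Rightarrow> 'a) \<Rightarrow> real) \<Rightarrow> real) \<Rightarrow> real
   \<Rightarrow> ('p \<Rightarrow> (('p \<Rightarrow> 'a) \<Rightarrow> real) \<Rightarrow> 'a \<Rightarrow> real) set" where
  "nearby A \<mu>' s \<mu> \<eta> = {s'\<in>B0 A \<mu>'. \<forall>i. \<forall>\<theta>\<in>supp (\<mu> i). mdist (A i) (s' i \<theta>) (s i \<theta>) \<le> \<eta>}"

definition stable ::
  "('p::finite \<Rightarrow> 'a set) \<Rightarrow> ('p \<Rightarrow> ('p \<Rightarrow> 'a) \<Rightarrow> real) \<Rightarrow> ('p \<Rightarrow> (('p \<Rightarrow> 'a) \<Rightarrow> real) \<Rightarrow> real)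
   \<Rightarrow> ('p \<Rightarrow> (('p \<Rightarrow> 'a) \<Rightarrow> real) \<Rightarrow> 'a \<Rightarrow> real) \<Rightarrow> bool" where
  "stable A \<pi> \<mu> s \<longleftrightarrow> balanced A \<pi> \<mu> s \<and>
    (\<forall>J. J \<noteq> {} \<longrightarrow> (\<forall>\<theta>t. mutant_profile A \<mu> J \<theta>t \<longrightarrow> (\<forall>\<eta>>0.
       \<exists>\<eta>b \<epsilon>b. 0 \<le> \<eta>b \<and> \<eta>b < \<eta> \<and> 0 < \<epsilon>b \<and> \<epsilon>b < 1 \<and>
         (\<forall>\<epsilon>. valid_shares J \<epsilon> \<and> 0 < shares_norm J \<epsilon> \<and> shares_norm J \<epsilon> < \<epsilon>b \<longrightarrow>
            nearby A (post_entry \<mu> J \<theta>t \<epsilon>) s \<mu> \<eta>b \<noteq> {} \<and>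
            (\<forall>s'\<in>nearby A (post_entry \<mu> J \<theta>t \<epsilon>) s \<mu> \<eta>b.
               (\<exists>j\<in>J. \<forall>\<theta>\<in>supp (\<mu> j).
                  avg_fit A \<pi> (post_entry \<mu> J \<theta>t \<epsilon>) s' j \<theta> >
                  avg_fit A \<pi> (post_entry \<mu> J \<theta>t \<epsilon>) s' j (\<theta>t j))
               \<or> balanced A \<pi> (post_entry \<mu> J \<theta>t \<epsilon>) s')))))"

end

theory Submission
  imports Defs
begin

definition pd :: "('t \<Rightarrow> real) \<Rightarrow> bool" where
  "pd m \<longleftrightarrow> (\<forall>t. 0 \<le> m t) \<and> finite (supp m) \<and> sum m (supp m) = 1"

lemma exp_payoff_eq:
  fixes A :: "'p::finite \<Rightarrow> 'a set"
  assumes finS: "\<forall>j. finite (supp (\<mu> j))"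
  shows "exp_payoff A \<mu> s i \<theta> \<sigma> = mlext A \<theta> ((aggregate \<mu> s)(i := \<sigma>))"
proof -
  define U where "U = (UNIV::'p set) - {i}"
  define T where "T = PiE U (\<lambda>j. supp (\<mu> j))"
  define P where "P = profiles A"
  define st where "st = (\<lambda>t j. if j = i then \<sigma> else s j (t j))"
  have "exp_payoff A \<mu> s i \<theta> \<sigma> = (\<Sum>t\<in>T. \<Sum>a\<in>P. (\<Prod>j\<in>U. \<mu> j (t j)) * ((\<Prod>p\<in>UNIV. st t p (a p)) * \<theta> a))"
    by (simp add: exp_payoff_def mlext_def sum_distrib_left T_def U_def P_def st_def)
  also have "\<dots> = (\<Sum>a\<in>P. \<Sum>t\<in>T. (\<Prod>j\<in>U. \<mu> j (t j)) * ((\<Prod>p\<in>UNIV. st t p (a p)) * \<theta> a))"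
    by (rule sum.swap)
  also have "\<dots> = (\<Sum>a\<in>P. (\<Prod>p\<in>UNIV. ((aggregate \<mu> s)(i := \<sigma>)) p (a p)) * \<theta> a)"
  proof (rule sum.cong[OF refl])
    fix a
    have e1: "(\<Prod>p\<in>UNIV. st t p (a p)) = \<sigma> (a i) * (\<Prod>j\<in>U. s j (t j) (a j))" for t
    proof -
      have "(\<Prod>p\<in>UNIV. st t p (a p)) = st t i (a i) * (\<Prod>p\<in>U. st t p (a p))"
        unfolding U_def by (rule prod.remove) auto
      also have "(\<Prod>p\<in>U. st t p (a p)) = (\<Prod>j\<in>U. s j (t j) (a j))"
        by (rule prod.cong) (auto simp: U_def st_def)
      finally show ?thesis by (simp add: st_def)
    qed
    have e2: "(\<Prod>p\<in>UNIV. ((aggregate \<mu> s)(i := \<sigma>)) p (a p)) = \<sigma> (a i) * (\<Prod>j\<in>U. aggregate \<mu> s j (a j))"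
    proof -
      have "(\<Prod>p\<in>UNIV. ((aggregate \<mu> s)(i := \<sigma>)) p (a p)) = ((aggregate \<mu> s)(i := \<sigma>)) i (a i) * (\<Prod>p\<in>U. ((aggregate \<mu> s)(i := \<sigma>)) p (a p))"
        unfolding U_def by (rule prod.remove) auto
      also have "(\<Prod>p\<in>U. ((aggregate \<mu> s)(i := \<sigma>)) p (a p)) = (\<Prod>j\<in>U. aggregate \<mu> s j (a j))"
        by (rule prod.cong) (auto simp: U_def)
      finally show ?thesis by simp
    qed
    have "(\<Sum>t\<in>T. (\<Prod>j\<in>U. \<mu> j (t j)) * ((\<Prod>p\<in>UNIV. st t p (a p)) * \<theta> a))
        = (\<Sum>t\<in>T. (\<sigma> (a i) * \<theta> a) * (\<Prod>j\<in>U. \<mu> j (t j) * s j (t j) (a j)))"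
      by (rule sum.cong[OF refl]) (simp add: e1 prod.distrib mult_ac)
    also have "\<dots> = (\<sigma> (a i) * \<theta> a) * (\<Sum>t\<in>T. \<Prod>j\<in>U. \<mu> j (t j) * s j (t j) (a j))"
      by (simp add: sum_distrib_left)
    also have "(\<Sum>t\<in>T. \<Prod>j\<in>U. \<mu> j (t j) * s j (t j) (a j)) = (\<Prod>j\<in>U. \<Sum>x\<in>supp (\<mu> j). \<mu> j x * s j x (a j))"
      unfolding T_def by (rule prod_sum_PiE[symmetric]) (use finS in \<open>auto simp: U_def\<close>)
    also have "\<dots> = (\<Prod>j\<in>U. aggregate \<mu> s j (a j))"
      by (simp add: aggregate_def)
    finally show "(\<Sum>t\<in>T. (\<Prod>j\<in>U. \<mu> j (t j)) * ((\<Prod>p\<in>UNIV. st t p (a p)) * \<theta> a))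
        = (\<Prod>p\<in>UNIV. ((aggregate \<mu> s)(i := \<sigma>)) p (a p)) * \<theta> a"
      unfolding e2 by (simp add: mult_ac)
  qed
  also have "\<dots> = mlext A \<theta> ((aggregate \<mu> s)(i := \<sigma>))"
    by (simp add: mlext_def P_def)
  finally show ?thesis .
qed

lemma mlext_affine:
  fixes A :: "'p::finite \<Rightarrow> 'a set"
  assumes fin: "\<forall>p. finite (A p)" and mix: "\<forall>p. \<sigma> p \<in> mixed (A p)"
    and aff: "\<forall>a\<in>profiles A. \<theta> a = \<alpha> * \<pi> a + \<beta>"
  shows "mlext A \<theta> \<sigma> = \<alpha> * mlext A \<pi> \<sigma> + \<beta>"
proof -
  have one: "(\<Sum>a\<in>profiles A. \<Prod>p\<in>UNIV. \<sigma> p (a p)) = 1"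
  proof -
    have "(\<Sum>a\<in>profiles A. \<Prod>p\<in>UNIV. \<sigma> p (a p)) = (\<Prod>p\<in>UNIV. \<Sum>x\<in>A p. \<sigma> p x)"
      unfolding profiles_def by (rule prod_sum_PiE[symmetric]) (use fin in auto)
    also have "\<dots> = 1" using mix by (simp add: mixed_def)
    finally show ?thesis .
  qed
  have "mlext A \<theta> \<sigma> = (\<Sum>a\<in>profiles A. \<alpha> * ((\<Prod>p\<in>UNIV. \<sigma> p (a p)) * \<pi> a) + \<beta> * (\<Prod>p\<in>UNIV. \<sigma> p (a p)))"
    unfolding mlext_def by (rule sum.cong[OF refl]) (simp add: aff algebra_simps)
  also have "\<dots> = \<alpha> * mlext A \<pi> \<sigma> + \<beta>"
    by (simp add: sum.distrib sum_distrib_left[symmetric] one mlext_def)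
  finally show ?thesis .
qed

lemma aggregate_mixed:
  assumes "pd m" "\<forall>\<theta>\<in>supp m. f \<theta> \<in> mixed B"
  shows "(\<lambda>a. \<Sum>\<theta>\<in>supp m. m \<theta> * f \<theta> a) \<in> mixed B"
proof -
  have nn: "\<forall>t. 0 \<le> m t" and s1: "sum m (supp m) = 1" using assms(1) by (auto simp: pd_def)
  have "(\<Sum>a\<in>B. \<Sum>\<theta>\<in>supp m. m \<theta> * f \<theta> a) = (\<Sum>\<theta>\<in>supp m. m \<theta> * (\<Sum>a\<in>B. f \<theta> a))"
    by (simp add: sum.swap[of _ B] sum_distrib_left)
  also have "\<dots> = (\<Sum>\<theta>\<in>supp m. m \<theta>)"
    by (rule sum.cong) (use assms(2) in \<open>auto simp: mixed_def\<close>)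
  finally show ?thesis using nn assms(2) s1 unfolding mixed_def
    by (auto intro!: sum_nonneg mult_nonneg_nonneg)
qed

lemma best:
  fixes A :: "'p::finite \<Rightarrow> 'a set"
  assumes fin: "\<forall>p. finite (A p)" and pdm: "\<forall>j. pd (\<mu> j)" and eq: "s \<in> B0 A \<mu>"
    and th: "\<theta> \<in> supp (\<mu> i)" and aff: "\<exists>\<alpha> \<beta>. \<alpha> > 0 \<and> (\<forall>a\<in>profiles A. \<theta> a = \<alpha> * \<pi> i a + \<beta>)"
    and th': "\<theta>' \<in> supp (\<mu> i)"
  shows "avg_fit A \<pi> \<mu> s i \<theta>' \<le> avg_fit A \<pi> \<mu> s i \<theta>"
proof -
  have finS: "\<forall>j. finite (supp (\<mu> j))" using pdm by (simp add: pd_def)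
  obtain \<alpha> \<beta> where a0: "\<alpha> > 0" and af: "\<forall>a\<in>profiles A. \<theta> a = \<alpha> * \<pi> i a + \<beta>" using aff by blast
  have aggm: "aggregate \<mu> s p \<in> mixed (A p)" for p
    unfolding aggregate_def by (rule aggregate_mixed) (use pdm eq in \<open>auto simp: B0_def\<close>)
  have m1: "s i \<theta> \<in> mixed (A i)" and m2: "s i \<theta>' \<in> mixed (A i)"
    using eq th th' by (auto simp: B0_def)
  have le: "exp_payoff A \<mu> s i \<theta> (s i \<theta>') \<le> exp_payoff A \<mu> s i \<theta> (s i \<theta>)"
    using eq th m2 by (auto simp: B0_def)
  have mx: "\<forall>p. ((aggregate \<mu> s)(i := \<sigma>)) p \<in> mixed (A p)" if "\<sigma> \<in> mixed (A i)" for \<sigma>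
    using that aggm by auto
  have E1: "exp_payoff A \<mu> s i \<theta> (s i \<theta>') = \<alpha> * mlext A (\<pi> i) ((aggregate \<mu> s)(i := s i \<theta>')) + \<beta>"
    unfolding exp_payoff_eq[OF finS] by (rule mlext_affine[OF fin mx[OF m2] af])
  have E2: "exp_payoff A \<mu> s i \<theta> (s i \<theta>) = \<alpha> * mlext A (\<pi> i) ((aggregate \<mu> s)(i := s i \<theta>)) + \<beta>"
    unfolding exp_payoff_eq[OF finS] by (rule mlext_affine[OF fin mx[OF m1] af])
  have "\<alpha> * mlext A (\<pi> i) ((aggregate \<mu> s)(i := s i \<theta>')) \<le> \<alpha> * mlext A (\<pi> i) ((aggregate \<mu> s)(i := s i \<theta>))"
    using le E1 E2 by linarith
  then show ?thesis using a0 unfolding avg_fit_def by (rule mult_left_le_imp_le)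
qed

lemma post_supp:
  assumes "pd m" "t0 \<notin> supp m" "0 < e" "e < 1"
  shows "supp (\<lambda>\<theta>. (1 - e) * m \<theta> + e * (if \<theta> = t0 then 1 else 0)) = insert t0 (supp m)"
  using assms by (auto simp: supp_def)

lemma post_pd:
  assumes "pd m" "t0 \<notin> supp m" "0 < e" "e < 1"
  shows "pd (\<lambda>\<theta>. (1 - e) * m \<theta> + e * (if \<theta> = t0 then 1 else 0))"
proof -
  have m0: "m t0 = 0" using assms(2) by (simp add: supp_def)
  have nn: "\<forall>t. 0 \<le> m t" and fs: "finite (supp m)" and s1: "sum m (supp m) = 1"
    using assms(1) by (auto simp: pd_def)
  have "(\<Sum>\<theta>\<in>insert t0 (supp m). (1 - e) * m \<theta> + e * (if \<theta> = t0 then 1 else 0))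
      = e + (\<Sum>\<theta>\<in>supp m. (1 - e) * m \<theta> + e * (if \<theta> = t0 then 1 else 0))"
    using fs assms(2) m0 by simp
  also have "(\<Sum>\<theta>\<in>supp m. (1 - e) * m \<theta> + e * (if \<theta> = t0 then 1 else 0)) = (\<Sum>\<theta>\<in>supp m. (1 - e) * m \<theta>)"
    by (rule sum.cong) (use assms(2) in auto)
  also have "\<dots> = 1 - e" using s1 by (simp add: sum_distrib_left[symmetric])
  finally show ?thesis unfolding pd_def post_supp[OF assms] using fs nn assms(3,4)
    by (auto intro!: add_nonneg_nonneg mult_nonneg_nonneg)
qed

lemma supp_nonempty: "pd m \<Longrightarrow> supp m \<noteq> {}"
  by (auto simp: pd_def)

theorem mainTheorem11:
  fixes A :: "'p::finite \<Rightarrow> 'a set"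
    and \<pi> :: "'p \<Rightarrow> ('p \<Rightarrow> 'a) \<Rightarrow> real"
    and \<mu> :: "'p \<Rightarrow> (('p \<Rightarrow> 'a) \<Rightarrow> real) \<Rightarrow> real"
    and s :: "'p \<Rightarrow> (('p \<Rightarrow> 'a) \<Rightarrow> real) \<Rightarrow> 'a \<Rightarrow> real"
  assumes game: "\<forall>i. finite (A i) \<and> A i \<noteq> {}"
    and dist: "is_prod_dist A \<mu>"
    and equil: "s \<in> B0 A \<mu>"
    and fitness_types: "\<forall>i. \<forall>\<theta>\<in>supp (\<mu> i). \<exists>\<alpha> \<beta>. \<alpha> > 0 \<and> (\<forall>a\<in>profiles A. \<theta> a = \<alpha> * \<pi> i a + \<beta>)"
    and nonempty_nearby: "\<forall>J. J \<noteq> {} \<longrightarrow> (\<forall>\<theta>t. mutant_profile A \<mu> J \<theta>t \<longrightarrow> (\<forall>\<eta>>0.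
         \<exists>\<epsilon>b>0. \<forall>\<epsilon>. valid_shares J \<epsilon> \<and> shares_norm J \<epsilon> < \<epsilon>b \<longrightarrow>
            nearby A (post_entry \<mu> J \<theta>t \<epsilon>) s \<mu> \<eta> \<noteq> {}))"
  shows "stable A \<pi> \<mu> s"
proof -
  have fin: "\<forall>p. finite (A p)" using game by blast
  have pdm: "\<forall>j. pd (\<mu> j)" using dist by (auto simp: is_prod_dist_def is_dist_def pd_def)
  have bal: "balanced A \<pi> \<mu> s"
    unfolding balanced_def
  proof (intro allI ballI)
    fix i \<theta> \<theta>' assume h: "\<theta> \<in> supp (\<mu> i)" "\<theta>' \<in> supp (\<mu> i)"
    show "avg_fit A \<pi> \<mu> s i \<theta> = avg_fit A \<pi> \<mu> s i \<theta>'"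
      using best[OF fin pdm equil h(1) _ h(2)] best[OF fin pdm equil h(2) _ h(1)] h fitness_types
      by force
  qed
  have stab: "\<exists>\<eta>b \<epsilon>b. 0 \<le> \<eta>b \<and> \<eta>b < \<eta> \<and> 0 < \<epsilon>b \<and> \<epsilon>b < 1 \<and>
         (\<forall>\<epsilon>. valid_shares J \<epsilon> \<and> 0 < shares_norm J \<epsilon> \<and> shares_norm J \<epsilon> < \<epsilon>b \<longrightarrow>
            nearby A (post_entry \<mu> J \<theta>t \<epsilon>) s \<mu> \<eta>b \<noteq> {} \<and>
            (\<forall>s'\<in>nearby A (post_entry \<mu> J \<theta>t \<epsilon>) s \<mu> \<eta>b.
               (\<exists>j\<in>J. \<forall>\<theta>\<in>supp (\<mu> j).
                  avg_fit A \<pi> (post_entry \<mu> J \<theta>t \<epsilon>) s' j \<theta> >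
                  avg_fit A \<pi> (post_entry \<mu> J \<theta>t \<epsilon>) s' j (\<theta>t j))
               \<or> balanced A \<pi> (post_entry \<mu> J \<theta>t \<epsilon>) s'))"
    if J: "J \<noteq> {}" and mut: "mutant_profile A \<mu> J \<theta>t" and eta: "\<eta> > 0" for J \<theta>t \<eta>
  proof -
    obtain \<epsilon>b0 where e0: "\<epsilon>b0 > 0" and ne: "\<forall>\<epsilon>. valid_shares J \<epsilon> \<and> shares_norm J \<epsilon> < \<epsilon>b0 \<longrightarrow>
            nearby A (post_entry \<mu> J \<theta>t \<epsilon>) s \<mu> (\<eta>/2) \<noteq> {}"
      using nonempty_nearby J mut eta by (meson half_gt_zero)
    have main: "nearby A (post_entry \<mu> J \<theta>t \<epsilon>) s \<mu> (\<eta>/2) \<noteq> {} \<and>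
            (\<forall>s'\<in>nearby A (post_entry \<mu> J \<theta>t \<epsilon>) s \<mu> (\<eta>/2).
               (\<exists>j\<in>J. \<forall>\<theta>\<in>supp (\<mu> j).
                  avg_fit A \<pi> (post_entry \<mu> J \<theta>t \<epsilon>) s' j \<theta> >
                  avg_fit A \<pi> (post_entry \<mu> J \<theta>t \<epsilon>) s' j (\<theta>t j))
               \<or> balanced A \<pi> (post_entry \<mu> J \<theta>t \<epsilon>) s')"
      if he: "valid_shares J \<epsilon> \<and> 0 < shares_norm J \<epsilon> \<and> shares_norm J \<epsilon> < min \<epsilon>b0 (1/2)" for \<epsilon>
    proof (intro conjI ballI)
      show "nearby A (post_entry \<mu> J \<theta>t \<epsilon>) s \<mu> (\<eta>/2) \<noteq> {}" using ne he by auto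
      define \<mu>' where "\<mu>' = post_entry \<mu> J \<theta>t \<epsilon>"
      have vs: "\<forall>j\<in>J. 0 < \<epsilon> j \<and> \<epsilon> j < 1" using he by (simp add: valid_shares_def)
      have mt: "\<forall>j\<in>J. \<theta>t j \<notin> supp (\<mu> j)" using mut by (simp add: mutant_profile_def)
      have pd': "\<forall>j. pd (\<mu>' j)"
      proof
        fix j show "pd (\<mu>' j)"
          using post_pd[of "\<mu> j" "\<theta>t j" "\<epsilon> j"] pdm vs mt by (auto simp: \<mu>'_def post_entry_def)
      qed
      have supp': "supp (\<mu>' j) = (if j \<in> J then insert (\<theta>t j) (supp (\<mu> j)) else supp (\<mu> j))" for j
        using post_supp[of "\<mu> j" "\<theta>t j" "\<epsilon> j"] pdm vs mt by (auto simp: \<mu>'_def post_entry_def)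
      fix s' assume s'n: "s' \<in> nearby A (post_entry \<mu> J \<theta>t \<epsilon>) s \<mu> (\<eta>/2)"
      then have eq': "s' \<in> B0 A \<mu>'" by (simp add: nearby_def \<mu>'_def)
      have res: "avg_fit A \<pi> \<mu>' s' i \<theta>' \<le> avg_fit A \<pi> \<mu>' s' i \<rho>"
        if "\<rho> \<in> supp (\<mu> i)" "\<theta>' \<in> supp (\<mu>' i)" for i \<rho> \<theta>'
        using best[OF fin pd' eq', of \<rho> i \<pi> \<theta>'] that fitness_types supp'[of i]
        by (auto split: if_splits)
      show "(\<exists>j\<in>J. \<forall>\<theta>\<in>supp (\<mu> j).
                  avg_fit A \<pi> (post_entry \<mu> J \<theta>t \<epsilon>) s' j \<theta> >
                  avg_fit A \<pi> (post_entry \<mu> J \<theta>t \<epsilon>) s' j (\<theta>t j))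
               \<or> balanced A \<pi> (post_entry \<mu> J \<theta>t \<epsilon>) s'"
        unfolding \<mu>'_def[symmetric]
      proof (subst disj_commute, rule disjCI)
        assume "\<not> (\<exists>j\<in>J. \<forall>\<theta>\<in>supp (\<mu> j). avg_fit A \<pi> \<mu>' s' j \<theta> > avg_fit A \<pi> \<mu>' s' j (\<theta>t j))"
        then have wit: "\<forall>j\<in>J. \<exists>\<theta>\<in>supp (\<mu> j). avg_fit A \<pi> \<mu>' s' j \<theta> \<le> avg_fit A \<pi> \<mu>' s' j (\<theta>t j)"
          by (auto simp: not_less)
        have key: "avg_fit A \<pi> \<mu>' s' i \<theta>' = avg_fit A \<pi> \<mu>' s' i \<rho>"
          if "\<rho> \<in> supp (\<mu> i)" "\<theta>' \<in> supp (\<mu>' i)" for i \<rho> \<theta>'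
        proof (cases "\<theta>' \<in> supp (\<mu> i)")
          case True
          have "\<rho> \<in> supp (\<mu>' i)" using that supp'[of i] by (auto split: if_splits)
          then show ?thesis using res[OF that] res[OF True] that by force
        next
          case False
          then have iJ: "i \<in> J" and tt: "\<theta>' = \<theta>t i" using that(2) supp'[of i] by (auto split: if_splits)
          then obtain \<rho>0 where r0: "\<rho>0 \<in> supp (\<mu> i)" "avg_fit A \<pi> \<mu>' s' i \<rho>0 \<le> avg_fit A \<pi> \<mu>' s' i (\<theta>t i)"
            using wit by blast
          have r0': "\<rho>0 \<in> supp (\<mu>' i)" "\<rho> \<in> supp (\<mu>' i)" using r0(1) that(1) supp'[of i] by auto
          show ?thesis using res[OF that] res[OF r0(1) that(2)] r0 res[OF that(1) r0'(1)] res[OF r0(1) r0'(2)]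
            unfolding tt by linarith
        qed
        show "balanced A \<pi> \<mu>' s'"
          unfolding balanced_def
        proof (intro allI ballI)
          fix i \<theta>1 \<theta>2 assume h: "\<theta>1 \<in> supp (\<mu>' i)" "\<theta>2 \<in> supp (\<mu>' i)"
          obtain \<rho> where "\<rho> \<in> supp (\<mu> i)" using supp_nonempty pdm by blast
          then show "avg_fit A \<pi> \<mu>' s' i \<theta>1 = avg_fit A \<pi> \<mu>' s' i \<theta>2"
            using key h by metis
        qed
      qed
    qed
    show ?thesis
      apply (rule exI[of _ "\<eta>/2"], rule exI[of _ "min \<epsilon>b0 (1/2)"])
      using main eta e0 by auto
  qed
  show ?thesis unfolding stable_def using bal stab by blast
qed

end
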